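(* As formal power series in $q$ with coefficients Laurent polynomials in $z$, \[ (1-z)(1-z^{-1})\,\overline{S}_1(z,q)=\sum_{n=0}^\infty\sum_{m=-\infty}^\infty\frac{\overline{N}(m,n)}{2}z^mq^n-\frac{(-q;q)_\infty}{(q;q)_\infty}\Bigl(\frac12+\sum_{n=1}^\infty\frac{(1-z)(1-z^{-1})(-1)^nq^n}{(1-zq^n)(1-z^{-1}q^n)}\Bigr). \]
   Context: Notation: $(a;q)_\infty=\prod_{k\ge0}(1-aq^k)$, $(a;q)_n=(a;q)_\infty/(aq^n;q)_\infty$. Define \[ \overline{S}_1(z,q)=\sum_{n=0}^\infty\frac{q^{2n+1}(-q^{2n+2};q)_\infty(q^{2n+2};q)_\infty}{(zq^{2n+1};q)_\infty(z^{-1}q^{2n+1};q)_\infty}. \] $\overline{N}(m,n)$ (number of overpartitions of $n$ with Dyson rank $m$) is defined by \[ \sum_{n\ge0}\sum_{m}\overline{N}(m,n)z^mq^n=\sum_{n=0}^\infty\frac{(-1;q)_n\,q^{n(n+1)/2}}{(zq;q)_n(z^{-1}q;q)_n}. \] *)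

theory Defs
  imports "HOL-Analysis.Analysis" "HOL-Computational_Algebra.Formal_Power_Series"
          "HOL-Computational_Algebra.Formal_Laurent_Series"
begin

text \<open>Formal power series in q whose coefficients are formal Laurent series in z
  (over the rationals); the Laurent polynomials in z embed into these.
  Infinite sums and products are taken in the standard (q-adic) topology on fps.\<close>

type_synonym qz = "rat fls fps"

definition zz :: qz where "zz = fps_const fls_X"
definition zinv :: qz where "zinv = fps_const fls_X_inv"
definition qq :: qz where "qq = fps_X"

definition qpoch_inf :: "qz \<Rightarrow> qz" where
  "qpoch_inf a = (\<Prod>k. 1 - a * qq ^ k)"
definition qpoch :: "qz \<Rightarrow> nat \<Rightarrow> qz" where
  "qpoch a n = (\<Prod>k<n. 1 - a * qq ^ k)"

definition S1bar :: qz where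
  "S1bar = (\<Sum>n. qq ^ (2*n+1) * qpoch_inf (- (qq ^ (2*n+2))) * qpoch_inf (qq ^ (2*n+2))
               / (qpoch_inf (zz * qq ^ (2*n+1)) * qpoch_inf (zinv * qq ^ (2*n+1))))"

definition overpart_rank_gf :: qz where
  "overpart_rank_gf = (\<Sum>n. qpoch (-1) n * qq ^ (n*(n+1) div 2)
                          / (qpoch (zz * qq) n * qpoch (zinv * qq) n))"

definition Nbar :: "int \<Rightarrow> nat \<Rightarrow> rat" where
  "Nbar m n = fls_nth (fps_nth overpart_rank_gf n) m"

end

theory Submission
  imports Defs
begin

definition ordge :: "nat \<Rightarrow> qz \<Rightarrow> bool" where "ordge k f \<longleftrightarrow> (\<forall>i<k. f$i = 0)"
definition teq :: "nat \<Rightarrow> qz \<Rightarrow> qz \<Rightarrow> bool" where "teq n f g \<longleftrightarrow> (\<forall>i\<le>n. f$i = g$i)"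

lemma teq_refl[simp]: "teq n f f" by (simp add: teq_def)
lemma teq_sym: "teq n f g \<Longrightarrow> teq n g f" by (simp add: teq_def)
lemma teq_trans: "teq n f g \<Longrightarrow> teq n g h \<Longrightarrow> teq n f h" by (simp add: teq_def)
lemma teq_ordge: "teq n f g \<longleftrightarrow> ordge (Suc n) (f - g)"
  by (auto simp: teq_def ordge_def)
lemma ordge_mono: "ordge k f \<Longrightarrow> j \<le> k \<Longrightarrow> ordge j f" by (auto simp: ordge_def)
lemma ordge_0[simp]: "ordge k 0" by (simp add: ordge_def)
lemma ordge_add: "ordge k f \<Longrightarrow> ordge k g \<Longrightarrow> ordge k (f + g)" by (simp add: ordge_def)
lemma ordge_diff: "ordge k f \<Longrightarrow> ordge k g \<Longrightarrow> ordge k (f - g)" by (simp add: ordge_def)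
lemma ordge_uminus: "ordge k f \<Longrightarrow> ordge k (- f)" by (simp add: ordge_def)
lemma ordge_sum: "(\<And>x. x \<in> A \<Longrightarrow> ordge k (f x)) \<Longrightarrow> ordge k (sum f A)"
  by (induction A rule: infinite_finite_induct) (auto intro: ordge_add)
lemma ordge_mult_right: "ordge k f \<Longrightarrow> ordge k (f * g)"
  unfolding ordge_def fps_mult_nth by (auto intro!: sum.neutral)
lemma ordge_mult_left: "ordge k f \<Longrightarrow> ordge k (g * f)"
  using ordge_mult_right[of k f g] by (simp add: mult.commute)
lemma ordge_mult: "ordge a f \<Longrightarrow> ordge b g \<Longrightarrow> ordge (a + b) (f * g)"
proof -
  assume f: "ordge a f" and g: "ordge b g"
  show ?thesis unfolding ordge_def fps_mult_nth
  proof (intro allI impI sum.neutral ballI)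
    fix i j assume "i < a + b" "j \<in> {0..i}"
    then have "j < a \<or> i - j < b" by auto
    then show "f $ j * g $ (i - j) = 0" using f g by (auto simp: ordge_def)
  qed
qed
lemma ordge_X_power: "ordge k (qq ^ k * f)"
  by (simp add: ordge_def qq_def fps_X_power_mult_nth)
lemma ordge_X_power': "j \<le> k \<Longrightarrow> ordge j (qq ^ k * f)"
  using ordge_X_power ordge_mono by blast

lemma teq_add: "teq n f f' \<Longrightarrow> teq n g g' \<Longrightarrow> teq n (f + g) (f' + g')" by (simp add: teq_def)
lemma teq_diff: "teq n f f' \<Longrightarrow> teq n g g' \<Longrightarrow> teq n (f - g) (f' - g')" by (simp add: teq_def)
lemma teq_uminus: "teq n f f' \<Longrightarrow> teq n (- f) (- f')" by (simp add: teq_def)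
lemma teq_mult: "teq n f f' \<Longrightarrow> teq n g g' \<Longrightarrow> teq n (f * g) (f' * g')"
  by (simp add: teq_def fps_mult_nth)
lemma teq_sum: "(\<And>x. x \<in> A \<Longrightarrow> teq n (f x) (g x)) \<Longrightarrow> teq n (sum f A) (sum g A)"
  by (simp add: teq_def fps_sum_nth)
lemma teq_zeroI: "ordge (Suc n) f \<Longrightarrow> teq n f 0"
  by (simp add: teq_ordge)
lemma teq_inverse:
  assumes "teq n f g" "fps_nth f 0 \<noteq> 0"
  shows "teq n (inverse f) (inverse g)"
proof -
  have g0: "fps_nth g 0 \<noteq> 0" using assms by (simp add: teq_def)
  have "inverse f - inverse g = inverse f * inverse g * (g - f)"
    using assms(2) g0 by (simp add: algebra_simps inverse_mult_eq_1 inverse_mult_eq_1')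
  moreover have "ordge (Suc n) (g - f)" using teq_sym[OF assms(1)] by (simp add: teq_ordge)
  ultimately show ?thesis unfolding teq_ordge by (simp add: ordge_mult_left)
qed
lemma fps_eq_teqI: "(\<And>n. teq n f g) \<Longrightarrow> f = g"
  unfolding fps_eq_iff teq_def by blast

lemma qpoch_Suc: "qpoch a (Suc m) = qpoch a m * (1 - a * qq ^ m)"
  by (simp add: qpoch_def)
lemma qpoch_0[simp]: "qpoch a 0 = 1" by (simp add: qpoch_def)

lemma ordge_qq_pow: "ordge k (qq ^ k)"
  using ordge_X_power[of k 1] by simp

lemma ordge_a_qpow: "fps_nth a 0 = 0 \<Longrightarrow> ordge (Suc k) (a * qq ^ k)"
  using ordge_mult[of 1 a k "qq^k"] ordge_qq_pow[of k] by (simp add: ordge_def)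

lemma teq_qpoch_mono:
  assumes "fps_nth a 0 = 0" "n \<le> m"
  shows "teq n (qpoch a m) (qpoch a (m + j))"
proof (induction j)
  case (Suc j)
  have "ordge (Suc n) (a * qq ^ (m + j))"
    using ordge_a_qpow[OF assms(1), of "m+j"] assms(2) ordge_mono by fastforce
  hence "ordge (Suc n) (qpoch a (m + j) * (a * qq ^ (m + j)))"
    by (rule ordge_mult_left)
  hence "teq n (qpoch a (m + j)) (qpoch a (m + Suc j))"
    by (simp add: teq_ordge qpoch_Suc right_diff_distrib)
  with Suc show ?case by (rule teq_trans)
qed simp

lemma teq_qpoch_mono':
  assumes "fps_nth a 0 = 0" "n \<le> m" "m \<le> m'"
  shows "teq n (qpoch a m) (qpoch a m')"
  using teq_qpoch_mono[OF assms(1,2), of "m' - m"] assms(3) by simp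

lemma qpoch_inf_teq:
  assumes a: "fps_nth a 0 = 0" and nm: "n \<le> m"
  shows "teq n (qpoch_inf a) (qpoch a m)"
proof -
  define L where "L = Abs_fps (\<lambda>i. fps_nth (qpoch a i) i)"
  have lim: "(\<lambda>N. \<Prod>k\<le>N. 1 - a * qq ^ k) \<longlonglongrightarrow> L"
  proof (rule tendsto_fpsI)
    fix i
    show "eventually (\<lambda>N. fps_nth (\<Prod>k\<le>N. 1 - a * qq ^ k) i = fps_nth L i) sequentially"
    proof (rule eventually_sequentiallyI[of i])
      fix N assume "i \<le> N"
      hence "teq i (qpoch a i) (qpoch a (Suc N))" using teq_qpoch_mono'[OF a] by simp
      moreover have "(\<Prod>k\<le>N. 1 - a * qq ^ k) = qpoch a (Suc N)"
        by (simp add: qpoch_def lessThan_Suc_atMost)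
      ultimately show "fps_nth (\<Prod>k\<le>N. 1 - a * qq ^ k) i = fps_nth L i"
        by (simp add: teq_def L_def)
    qed
  qed
  have "L \<noteq> 0"
  proof
    assume "L = 0"
    hence "fps_nth L 0 = 0" by simp
    thus False by (simp add: L_def)
  qed
  with lim have "(\<lambda>k. 1 - a * qq ^ k) has_prod L"
    by (simp add: has_prod_def raw_has_prod_def)
  hence "qpoch_inf a = L" unfolding qpoch_inf_def by (rule has_prod_unique[symmetric])
  moreover have "teq n L (qpoch a m)"
    unfolding teq_def
  proof (intro allI impI)
    fix i assume "i \<le> n"
    hence "teq i (qpoch a i) (qpoch a m)" using teq_qpoch_mono'[OF a] nm by simp
    thus "fps_nth L i = fps_nth (qpoch a m) i" by (simp add: L_def teq_def)
  qed
  ultimately show ?thesis by simp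
qed

lemma teq_partial_sums:
  assumes f: "\<And>k. ordge k (f k)" and "n < m" "m \<le> m'"
  shows "teq n (\<Sum>k<m. f k) (\<Sum>k<m'. f k)"
proof -
  have "(\<Sum>k<m'. f k) = (\<Sum>k<m. f k) + (\<Sum>k\<in>{m..<m'}. f k)"
    using sum.atLeastLessThan_concat[of 0 m m' f] assms(3) by (simp add: atLeast0LessThan)
  moreover have "ordge (Suc n) (\<Sum>k\<in>{m..<m'}. f k)"
    proof (rule ordge_sum)
    fix k assume "k \<in> {m..<m'}"
    hence "Suc n \<le> k" using assms(2) by simp
    thus "ordge (Suc n) (f k)" using f ordge_mono by blast
  qed
  ultimately show ?thesis by (simp add: teq_ordge ordge_uminus)
qed

lemma suminf_teq:
  assumes f: "\<And>k. ordge k (f k)" and nm: "n < m"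
  shows "teq n (suminf f) (\<Sum>k<m. f k)"
proof -
  define L where "L = Abs_fps (\<lambda>i. fps_nth (\<Sum>k<Suc i. f k) i)"
  have "(\<lambda>N. \<Sum>k<N. f k) \<longlonglongrightarrow> L"
  proof (rule tendsto_fpsI)
    fix i
    show "eventually (\<lambda>N. fps_nth (\<Sum>k<N. f k) i = fps_nth L i) sequentially"
    proof (rule eventually_sequentiallyI[of "Suc i"])
      fix N assume "Suc i \<le> N"
      hence "teq i (\<Sum>k<Suc i. f k) (\<Sum>k<N. f k)" by (intro teq_partial_sums[OF f]) auto
      thus "fps_nth (\<Sum>k<N. f k) i = fps_nth L i" by (simp add: teq_def L_def)
    qed
  qed
  hence "f sums L" by (simp add: sums_def)
  hence "suminf f = L" by (rule sums_unique[symmetric])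
  moreover have "teq n L (\<Sum>k<m. f k)"
    unfolding teq_def
  proof (intro allI impI)
    fix i assume "i \<le> n"
    hence "teq i (\<Sum>k<Suc i. f k) (\<Sum>k<m. f k)" using nm by (intro teq_partial_sums[OF f]) auto
    thus "fps_nth L i = fps_nth (\<Sum>k<m. f k) i" by (simp add: L_def teq_def)
  qed
  ultimately show ?thesis by simp
qed

fun gb :: "'a::comm_ring_1 \<Rightarrow> nat \<Rightarrow> nat \<Rightarrow> 'a" where
  "gb q n 0 = 1"
| "gb q 0 (Suc k) = 0"
| "gb q (Suc n) (Suc k) = gb q n k + q^(Suc k) * gb q n (Suc k)"

fun tri :: "nat \<Rightarrow> nat" where
  "tri 0 = 0" | "tri (Suc k) = tri k + k"

lemma tri_add: "tri (a + b) = tri a + tri b + a * b"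
  by (induction b) (auto simp: algebra_simps)


lemma gb_zero: "n < k \<Longrightarrow> gb q n k = 0"
proof (induction n arbitrary: k)
  case 0 then show ?case by (cases k) auto
next
  case (Suc n) then show ?case by (cases k) auto
qed

lemma gb_same[simp]: "gb q n n = 1"
  by (induction n) (auto simp: gb_zero)

lemma gb_sum_Suc:
  "(\<Sum>k\<le>Suc m. gb q (Suc m) k * F k) =
     (\<Sum>k\<le>m. gb q m k * F (Suc k)) + (\<Sum>k\<le>m. gb q m k * q^k * F k)"
proof -
  have 1: "(\<Sum>k\<le>Suc m. gb q (Suc m) k * F k) = F 0 + (\<Sum>k\<le>m. gb q (Suc m) (Suc k) * F (Suc k))"
    unfolding sum.atMost_Suc_shift by simp
  have 2: "(\<Sum>k\<le>m. gb q (Suc m) (Suc k) * F (Suc k)) = (\<Sum>k\<le>m. gb q m k * F (Suc k)) + (\<Sum>k\<le>m. q^(Suc k) * gb q m (Suc k) * F (Suc k))"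
    by (simp add: algebra_simps sum.distrib)
  have 3: "F 0 + (\<Sum>k\<le>m. q^(Suc k) * gb q m (Suc k) * F (Suc k)) = (\<Sum>k\<le>Suc m. gb q m k * q^k * F k)"
    by (simp only: sum.atMost_Suc_shift[of _ m]) (simp add: algebra_simps)
  have 4: "(\<Sum>k\<le>Suc m. gb q m k * q^k * F k) = (\<Sum>k\<le>m. gb q m k * q^k * F k)"
    by (simp add: gb_zero)
  show ?thesis using 1 2 3 4 by (simp add: algebra_simps)
qed

lemma pascal2_aux:
  fixes A B a b c x y u v :: "'a::comm_ring_1"
  assumes "A = x * a + b" "B = y * b + c" "A = a + u * b" "B = b + v * c" "v * y = x * u"
  shows "A + v * B = x * A + B"
proof -
  have 1: "A + v * B = (x * a + b) + v *(y * b + c)" using assms(1,2) by simp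
  have 2: "x * A + B = x*(a + u * b) + (b + v * c)" using assms(3,4) by simp
  have 3: "(x * a + b) + v *(y * b + c) - (x*(a + u * b) + (b + v * c)) = (v * y - x * u) * b"
    by (simp add: algebra_simps)
  have "(x * a + b) + v *(y * b + c) = x * a + b + (v * y)*b + v * c" by (simp add: algebra_simps)
  also have "\<dots> = x * a + b + (x * u)*b + v * c" using assms(5) by simp
  also have "\<dots> = x*(a + u * b) + (b + v * c)" by (simp add: algebra_simps)
  finally show ?thesis using 1 2 by simp
qed

lemma gb_pascal2: "k \<le> n \<Longrightarrow> gb q (Suc n) (Suc k) = q^(n-k) * gb q n k + gb q n (Suc k)"
proof (induction n arbitrary: k)
  case 0 then show ?case by simp
next
  case (Suc n)
  show ?case
  proof (cases k)
    case 0
    then show ?thesis using Suc.IH[of 0] by (simp add: algebra_simps)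
  next
    case (Suc k')
    with Suc.prems have k': "k' \<le> n" by simp
    have IH1: "gb q (Suc n) (Suc k') = q^(n-k') * gb q n k' + gb q n (Suc k')" using Suc.IH k' by simp
    show ?thesis
    proof (cases "k' = n")
      case True
      then show ?thesis using IH1 \<open>k = Suc k'\<close> by (simp add: gb_zero)
    next
      case False
      then obtain d where d: "n = Suc k' + d" using k' by (metis add_Suc le_eq_less_or_eq less_iff_Suc_add)
      have IH2: "gb q (Suc n) (Suc (Suc k')) = q^d * gb q n (Suc k') + gb q n (Suc (Suc k'))"
        using Suc.IH[of "Suc k'"] d by simp
      have e1: "n - k' = Suc d" using d by simp
      have L: "gb q (Suc (Suc n)) (Suc (Suc k')) = gb q (Suc n) (Suc k') + q^(Suc (Suc k')) * gb q (Suc n) (Suc (Suc k'))"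
        by (rule gb.simps(3))
      have P1a: "gb q (Suc n) (Suc k') = gb q n k' + q^(Suc k') * gb q n (Suc k')" by (rule gb.simps(3))
      have P1b: "gb q (Suc n) (Suc (Suc k')) = gb q n (Suc k') + q^(Suc (Suc k')) * gb q n (Suc (Suc k'))" by (rule gb.simps(3))
      have pw: "q^(Suc (Suc k')) * q^d = q^(Suc d) * q^(Suc k')" by (simp add: power_add[symmetric])
      have "gb q (Suc (Suc n)) (Suc (Suc k')) = q^(Suc d) * gb q (Suc n) (Suc k') + gb q (Suc n) (Suc (Suc k'))"
        unfolding L by (rule pascal2_aux[OF _ IH2 P1a P1b pw]) (use IH1 e1 in simp)
      thus ?thesis using \<open>k = Suc k'\<close> e1 by simp
    qed
  qed
qed

lemma gb_sum_Suc2: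
  "(\<Sum>k\<le>Suc m. gb q (Suc m) k * F k) =
     (\<Sum>k\<le>m. gb q m k * F k) + (\<Sum>k\<le>m. q^(m-k) * gb q m k * F (Suc k))"
proof -
  have 1: "(\<Sum>k\<le>Suc m. gb q (Suc m) k * F k) = F 0 + (\<Sum>k\<le>m. gb q (Suc m) (Suc k) * F (Suc k))"
    unfolding sum.atMost_Suc_shift by simp
  have 2: "(\<Sum>k\<le>m. gb q (Suc m) (Suc k) * F (Suc k)) = (\<Sum>k\<le>m. q^(m-k) * gb q m k * F (Suc k) + gb q m (Suc k) * F (Suc k))"
    by (rule sum.cong[OF refl], subst gb_pascal2, auto simp: algebra_simps)
  have 3: "F 0 + (\<Sum>k\<le>m. gb q m (Suc k) * F (Suc k)) = (\<Sum>k\<le>Suc m. gb q m k * F k)"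
    by (simp only: sum.atMost_Suc_shift[of _ m]) simp
  have 4: "(\<Sum>k\<le>Suc m. gb q m k * F k) = (\<Sum>k\<le>m. gb q m k * F k)"
    by (simp add: gb_zero)
  show ?thesis using 1 2 3 4 by (simp add: sum.distrib algebra_simps)
qed

lemma hqb: "(\<Prod>i<m. y - x * q^i) = (\<Sum>k\<le>m. gb q m k * ((-1)^k * q^(tri k) * x^k * y^(m-k)))"
proof (induction m arbitrary: x)
  case 0 then show ?case by simp
next
  case (Suc m)
  have "(\<Prod>i<Suc m. y - x * q^i) = (y - x) * (\<Prod>i<m. y - (x*q) * q^i)"
    unfolding prod.lessThan_Suc_shift by (simp add: mult_ac)
  also have "\<dots> = (y - x) * (\<Sum>k\<le>m. gb q m k * ((-1)^k * q^(tri k) * (x*q)^k * y^(m-k)))"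
    by (simp add: Suc.IH)
  also have "\<dots> = (\<Sum>k\<le>m. gb q m k * ((-1)^Suc k * q^(tri (Suc k)) * x^Suc k * y^(Suc m - Suc k)))
          + (\<Sum>k\<le>m. gb q m k * q^k * ((-1)^k * q^(tri k) * x^k * y^(Suc m-k)))"
  proof -
    have a: "(\<Sum>k\<le>m. gb q m k * ((-1)^Suc k * q^(tri (Suc k)) * x^Suc k * y^(Suc m - Suc k)))
       = - x * (\<Sum>k\<le>m. gb q m k * ((-1)^k * q^(tri k) * (x*q)^k * y^(m-k)))"
      by (simp add: sum_distrib_left power_add power_mult_distrib algebra_simps)
    have b: "(\<Sum>k\<le>m. gb q m k * q^k * ((-1)^k * q^(tri k) * x^k * y^(Suc m-k)))
       = y * (\<Sum>k\<le>m. gb q m k * ((-1)^k * q^(tri k) * (x*q)^k * y^(m-k)))"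
      unfolding sum_distrib_left
      by (rule sum.cong) (auto simp: Suc_diff_le power_mult_distrib algebra_simps)
    show ?thesis unfolding a b by (simp add: algebra_simps)
  qed
  also have "\<dots> = (\<Sum>k\<le>Suc m. gb q (Suc m) k * ((-1)^k * q^(tri k) * x^k * y^(Suc m-k)))"
    by (rule gb_sum_Suc[symmetric])
  finally show ?case .
qed

definition qp :: "'a::comm_ring_1 \<Rightarrow> 'a \<Rightarrow> nat \<Rightarrow> 'a" where
  "qp q a n = (\<Prod>k<n. 1 - a * q^k)"

lemma qp_0[simp]: "qp q a 0 = 1" by (simp add: qp_def)
lemma qp_Suc: "qp q a (Suc n) = qp q a n * (1 - a * q^n)" by (simp add: qp_def)
lemma qp_Suc': "qp q a (Suc n) = (1 - a) * qp q (a*q) n"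
  unfolding qp_def prod.lessThan_Suc_shift by (simp add: mult_ac)
lemma qp_add: "qp q a (m + k) = qp q a m * qp q (a * q^m) k"
  by (induction k) (simp_all add: qp_Suc power_add algebra_simps)

lemma qbinom: "qp q x m = (\<Sum>k\<le>m. gb q m k * ((-1)^k * q^(tri k) * x^k))"
  using hqb[where y=1 and x=x and q=q and m=m] by (simp add: qp_def)

lemma gb_H: "(\<Sum>k\<le>N. gb q N k * (qp q x k * x^(N-k))) = 1"
proof (induction N)
  case 0 then show ?case by simp
next
  case (Suc N)
  have "(\<Sum>k\<le>Suc N. gb q (Suc N) k * (qp q x k * x^(Suc N-k)))
     = (\<Sum>k\<le>N. gb q N k * (qp q x (Suc k) * x^(Suc N - Suc k))) + (\<Sum>k\<le>N. gb q N k * q^k * (qp q x k * x^(Suc N-k)))"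
    by (rule gb_sum_Suc)
  also have "\<dots> = (\<Sum>k\<le>N. gb q N k * (qp q x k * x^(N-k)))"
    unfolding sum.distrib[symmetric]
    by (rule sum.cong) (auto simp: qp_Suc Suc_diff_le algebra_simps)
  finally show ?case using Suc.IH by simp
qed

definition G0 :: "'a::comm_ring_1 \<Rightarrow> nat \<Rightarrow> 'a" where "G0 q n = (\<Sum>k\<le>n. gb q n k * (-1)^k)"
definition G1 :: "'a::comm_ring_1 \<Rightarrow> nat \<Rightarrow> 'a" where "G1 q n = (\<Sum>k\<le>n. gb q n k * ((-1)^k * q^k))"

lemma G0_Suc: "G0 q (Suc n) = - G0 q n + G1 q n"
proof -
  have "G0 q (Suc n) = (\<Sum>k\<le>n. gb q n k * (-1)^(Suc k)) + (\<Sum>k\<le>n. gb q n k * q^k * (-1)^k)"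
    unfolding G0_def by (rule gb_sum_Suc)
  also have "(\<Sum>k\<le>n. gb q n k * (-1)^(Suc k)) = - G0 q n"
    unfolding G0_def sum_negf[symmetric] by simp
  also have "(\<Sum>k\<le>n. gb q n k * q^k * (-1)^k) = G1 q n"
    unfolding G1_def by (rule sum.cong) (simp_all add: mult_ac)
  finally show ?thesis .
qed

lemma G1_Suc: "G1 q (Suc n) = G1 q n - q^(Suc n) * G0 q n"
proof -
  have "G1 q (Suc n) = (\<Sum>k\<le>n. gb q n k * ((-1)^k * q^k)) + (\<Sum>k\<le>n. q^(n-k) * gb q n k * ((-1)^(Suc k) * q^(Suc k)))"
    unfolding G1_def by (rule gb_sum_Suc2)
  also have "(\<Sum>k\<le>n. q^(n-k) * gb q n k * ((-1)^(Suc k) * q^(Suc k))) = - (q^(Suc n) * G0 q n)"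
    unfolding G0_def sum_distrib_left sum_negf[symmetric]
  proof (rule sum.cong[OF refl])
    fix k assume "k \<in> {..n}"
    hence "n - k + Suc k = Suc n" by simp
    hence e: "q^(n-k) * q^(Suc k) = q^(Suc n)" by (metis power_add)
    have "q^(n-k) * gb q n k * ((-1)^(Suc k) * q^(Suc k)) = - ((q^(n-k) * q^(Suc k)) * (gb q n k * (-1)^k))"
      by (simp add: mult_ac)
    also have "\<dots> = - (q^(Suc n) * (gb q n k * (-1)^k))" by (simp only: e)
    finally show "q^(n-k) * gb q n k * ((-1)^(Suc k) * q^(Suc k)) = - (q^(Suc n) * (gb q n k * (-1)^k))" .
  qed
  finally show ?thesis by (simp add: G1_def)
qed

lemma gauss: "G0 q (2*n) = (\<Prod>i<n. 1 - q^(2*i+1))"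
proof (induction n)
  case 0 then show ?case by (simp add: G0_def)
next
  case (Suc n)
  have "G0 q (2 * Suc n) = G0 q (Suc (Suc (2*n)))" by simp
  also have "\<dots> = - G0 q (Suc (2*n)) + G1 q (Suc (2*n))" by (rule G0_Suc)
  also have "\<dots> = - (- G0 q (2*n) + G1 q (2*n)) + (G1 q (2*n) - q^(Suc (2*n)) * G0 q (2*n))"
    by (simp only: G0_Suc G1_Suc)
  also have "\<dots> = G0 q (2*n) - q^(Suc (2*n)) * G0 q (2*n)" by (simp add: algebra_simps)
  finally show ?case using Suc.IH by (simp add: algebra_simps)
qed

lemma gb_fact: "k \<le> n \<Longrightarrow> gb q n k * qp q q k * qp q q (n-k) = qp q q n"
proof (induction n arbitrary: k)
  case 0 then show ?case by simp
next
  case (Suc n)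
  show ?case
  proof (cases k)
    case 0 then show ?thesis by simp
  next
    case (Suc k')
    with Suc.prems have k': "k' \<le> n" by simp
    have T1: "gb q n k' * qp q q (Suc k') * qp q q (n - k') = qp q q n * (1 - q^(Suc k'))"
      using Suc.IH[OF k'] by (simp add: qp_Suc algebra_simps)
    show ?thesis
    proof (cases "k' = n")
      case True
      then show ?thesis using T1 \<open>k = Suc k'\<close> by (simp add: gb_zero qp_Suc algebra_simps)
    next
      case False
      hence k2: "Suc k' \<le> n" using k' by simp
      have nk: "n - k' = Suc (n - Suc k')" using k2 by simp
      have T2: "q^(Suc k') * gb q n (Suc k') * qp q q (Suc k') * qp q q (n - k') = qp q q n * (q^(Suc k') - q^(Suc n))"
      proof -
        have "q^(Suc k') * gb q n (Suc k') * qp q q (Suc k') * qp q q (n - k')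
            = q^(Suc k') * (1 - q^(n - k')) * (gb q n (Suc k') * qp q q (Suc k') * qp q q (n - Suc k'))"
          unfolding nk by (simp add: qp_Suc algebra_simps)
        also have "\<dots> = q^(Suc k') * (1 - q^(n - k')) * qp q q n" using Suc.IH[OF k2] by simp
        also have "Suc k' + (n - k') = Suc n" using k' by simp
        hence "q^(Suc k') * q^(n - k') = q^(Suc n)" by (metis power_add)
        hence "q^(Suc k') * (1 - q^(n - k')) * qp q q n = qp q q n * (q^(Suc k') - q^(Suc n))"
          by (simp add: algebra_simps)
        finally show ?thesis .
      qed
      have "gb q (Suc n) k * qp q q k * qp q q (Suc n - k) =
            gb q n k' * qp q q (Suc k') * qp q q (n - k') + q^(Suc k') * gb q n (Suc k') * qp q q (Suc k') * qp q q (n - k')"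
        using \<open>k = Suc k'\<close> by (simp add: algebra_simps)
      also have "\<dots> = qp q q (Suc n)" unfolding T1 T2 by (simp add: qp_Suc algebra_simps)
      finally show ?thesis .
    qed
  qed
qed

lemma sum_swap_tri:
  fixes f :: "nat \<Rightarrow> nat \<Rightarrow> 'a::comm_monoid_add"
  shows "(\<Sum>j\<le>N. \<Sum>r\<le>j. f j r) = (\<Sum>r\<le>N. \<Sum>j\<in>{r..N}. f j r)"
proof (induction N)
  case 0 then show ?case by simp
next
  case (Suc N)
  have "(\<Sum>r\<le>Suc N. \<Sum>j\<in>{r..Suc N}. f j r) = (\<Sum>r\<le>N. \<Sum>j\<in>{r..Suc N}. f j r) + f (Suc N) (Suc N)"
    by simp
  also have "(\<Sum>r\<le>N. \<Sum>j\<in>{r..Suc N}. f j r) = (\<Sum>r\<le>N. (\<Sum>j\<in>{r..N}. f j r) + f (Suc N) r)"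
    by (rule sum.cong) (auto simp: atLeastAtMostSuc_conv add.commute)
  finally show ?case using Suc.IH by (simp add: sum.distrib)
qed

lemma sum_fold_center:
  fixes g :: "nat \<Rightarrow> 'a::comm_monoid_add" and n :: nat
  shows
  "(\<Sum>k\<le>2*n. g k) = (\<Sum>r\<le>n. if r = 0 then g n else g (n + r) + g (n - r))"
proof -
  have A: "{..2*n} = {..<n} \<union> {n} \<union> {n+1..2*n}" by auto
  have "(\<Sum>k\<le>2*n. g k) = (\<Sum>k\<in>{..<n} \<union> {n}. g k) + (\<Sum>k\<in>{n+1..2*n}. g k)"
    unfolding A by (rule sum.union_disjoint) auto
  also have "(\<Sum>k\<in>{..<n} \<union> {n}. g k) = (\<Sum>k<n. g k) + g n"
    by (subst sum.union_disjoint) auto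
  also have "(\<Sum>k<n. g k) = (\<Sum>r\<in>{1..n}. g (n - r))"
    by (rule sum.reindex_bij_witness[where i="\<lambda>r. n - r" and j="\<lambda>k. n - k"]) auto
  also have "(\<Sum>k\<in>{n+1..2*n}. g k) = (\<Sum>r\<in>{1..n}. g (n + r))"
    by (rule sum.reindex_bij_witness[where i="\<lambda>r. n + r" and j="\<lambda>k. k - n"]) auto
  also have "(\<Sum>r\<le>n. if r = 0 then g n else g (n + r) + g (n - r)) = g n + (\<Sum>r\<in>{1..n}. g (n + r) + g (n - r))"
  proof -
    have "{..n} = insert 0 {1..n}" by auto
    thus ?thesis by (simp add: sum.distrib)
  qed
  ultimately show ?thesis by (simp add: sum.distrib algebra_simps)
qed

lemma qpoch_qp: "qpoch a n = qp qq a n" by (simp add: qpoch_def qp_def)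

definition qf :: "nat \<Rightarrow> qz" where "qf n = qpoch qq n"
definition iq :: "nat \<Rightarrow> qz" where "iq n = inverse (qf n)"
definition ineg :: "nat \<Rightarrow> qz" where "ineg n = inverse (qpoch (-qq) n)"

lemma qq_nth0[simp]: "fps_nth qq 0 = 0" by (simp add: qq_def)
lemma zz_inv: "zz * zinv = 1"
  by (simp add: zz_def zinv_def fls_X_inv_times_conv_shift)

lemma qpoch_nth0: "fps_nth a 0 = 0 \<Longrightarrow> fps_nth (qpoch a n) 0 = 1"
  by (induction n) (simp_all add: qpoch_Suc)

lemma unit_inv: "fps_nth (f::qz) 0 \<noteq> 0 \<Longrightarrow> f * inverse f = 1"
  by (rule inverse_mult_eq_1')

lemma qpoch_inv: "fps_nth a 0 = 0 \<Longrightarrow> qpoch a n * inverse (qpoch a n) = 1"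
  by (rule unit_inv) (simp add: qpoch_nth0)

lemma nth0_simps[simp]: "fps_nth (-qq) 0 = 0" "fps_nth (zz*qq) 0 = 0" "fps_nth (zinv*qq) 0 = 0"
  by (simp_all add: qq_def)

lemma qf_iq: "qf n * iq n = 1" unfolding qf_def iq_def by (rule qpoch_inv) simp
lemma qf_nz: "qf n \<noteq> 0"
proof
  assume "qf n = 0" thus False using qf_iq[of n] by simp
qed
lemma qneg_ineg: "qpoch (-qq) n * ineg n = 1" unfolding ineg_def by (rule qpoch_inv) simp

lemma qf_Suc: "qf (Suc n) = qf n * (1 - qq^(Suc n))"
  by (simp add: qf_def qpoch_Suc)

lemma inv_1mq: "(1 - qq^(Suc n)) * inverse (1 - qq^(Suc n)) = 1"
  by (rule unit_inv) (simp add: qq_def)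

lemma iq_Suc: "iq n = iq (Suc n) * (1 - qq^(Suc n))"
proof -
  have "iq (Suc n) = iq n * inverse (1 - qq^(Suc n))"
    unfolding iq_def qf_Suc by (rule fps_inverse_mult)
  hence "iq (Suc n) * (1 - qq^(Suc n)) = iq n * ((1 - qq^(Suc n)) * inverse (1 - qq^(Suc n)))"
    by (simp only: mult_ac)
  thus ?thesis by (simp only: inv_1mq mult_1_right)
qed

lemma gb_R: "k \<le> n \<Longrightarrow> gb qq n k = qf n * (iq k * iq (n-k))"
proof -
  assume "k \<le> n"
  hence "gb qq n k * qf k * qf (n-k) = qf n" using gb_fact[of k n qq] by (simp add: qf_def qpoch_qp)
  hence "(gb qq n k * qf k * qf (n-k)) * (iq k * iq (n-k)) = qf n * (iq k * iq (n-k))"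
    by simp
  moreover have "(gb qq n k * qf k * qf (n-k)) * (iq k * iq (n-k)) = gb qq n k * ((qf k * iq k) * (qf (n-k) * iq (n-k)))"
    by (simp only: mult_ac)
  ultimately show ?thesis by (simp add: qf_iq)
qed

text \<open>Bailey-type swap\<close>
lemma bailey:
  assumes K: "\<And>r. r \<le> N \<Longrightarrow> (\<Sum>j\<in>{r..N}. A j * (iq (j-r) * iq (j+r))) = C r * (iq (N-r) * iq (N+r))"
    and P: "\<And>j. j \<le> N \<Longrightarrow> \<beta> j = (\<Sum>r\<le>j. \<alpha> r * (iq (j-r) * iq (j+r)))"
  shows "(\<Sum>j\<le>N. A j * \<beta> j) = (\<Sum>r\<le>N. \<alpha> r * C r * (iq (N-r) * iq (N+r)))"
proof -
  have "(\<Sum>j\<le>N. A j * \<beta> j) = (\<Sum>j\<le>N. \<Sum>r\<le>j. \<alpha> r * (A j * (iq (j-r) * iq (j+r))))"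
    by (rule sum.cong) (simp_all add: P sum_distrib_left mult_ac)
  also have "\<dots> = (\<Sum>r\<le>N. \<Sum>j\<in>{r..N}. \<alpha> r * (A j * (iq (j-r) * iq (j+r))))"
    by (rule sum_swap_tri)
  also have "\<dots> = (\<Sum>r\<le>N. \<alpha> r * C r * (iq (N-r) * iq (N+r)))"
    by (rule sum.cong) (simp_all add: sum_distrib_left[symmetric] K)
  finally show ?thesis .
qed

definition zw :: "nat \<Rightarrow> qz" where "zw n = qpoch zz n * qpoch zinv n"
definition zwq :: "nat \<Rightarrow> qz" where "zwq n = qpoch (zz*qq) n * qpoch (zinv*qq) n"
definition izw :: "nat \<Rightarrow> qz" where "izw n = inverse (qpoch (zz*qq) n) * inverse (qpoch (zinv*qq) n)"
definition cz :: qz where "cz = (1 - zz) * (1 - zinv)"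
definition gam :: "nat \<Rightarrow> qz" where "gam r = zw r * qq^r * izw r"

lemma zwq_izw: "zwq n * izw n = 1"
proof -
  have "zwq n * izw n = (qpoch (zz*qq) n * inverse (qpoch (zz*qq) n)) * (qpoch (zinv*qq) n * inverse (qpoch (zinv*qq) n))"
    by (simp add: zwq_def izw_def algebra_simps)
  thus ?thesis by (simp add: qpoch_inv)
qed

lemma qpoch_Suc': "qpoch a (Suc n) = (1 - a) * qpoch (a * qq) n"
  by (simp add: qpoch_qp qp_Suc')

lemma zw_Suc: "zw (Suc n) = cz * zwq n"
  by (simp add: zw_def zwq_def cz_def qpoch_Suc' algebra_simps)

lemma zwq_Suc: "zwq (Suc n) = zwq n * ((1 - zz*qq^(Suc n)) * (1 - zinv*qq^(Suc n)))"
  by (simp add: zwq_def qpoch_Suc algebra_simps)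

lemma zw_r_aux: "zw r * izw r * ((1 - zz*qq^r) * (1 - zinv*qq^r)) = cz"
proof -
  have a: "qpoch zz r * (1 - zz*qq^r) = (1 - zz) * qpoch (zz*qq) r"
    using qpoch_Suc[of zz r] qpoch_Suc'[of zz r] by simp
  have b: "qpoch zinv r * (1 - zinv*qq^r) = (1 - zinv) * qpoch (zinv*qq) r"
    using qpoch_Suc[of zinv r] qpoch_Suc'[of zinv r] by simp
  have "zw r * izw r * ((1 - zz*qq^r) * (1 - zinv*qq^r)) =
        (qpoch zz r * (1 - zz*qq^r)) * (qpoch zinv r * (1 - zinv*qq^r)) * izw r"
    by (simp add: zw_def algebra_simps)
  also have "\<dots> = cz * zwq r * izw r" unfolding a b by (simp add: cz_def zwq_def algebra_simps)
  also have "\<dots> = cz" using zwq_izw by (simp add: mult.assoc)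
  finally show ?thesis .
qed

lemma bracket_gen:
  fixes z w Q S :: "'a::comm_ring_1"
  assumes "z * w = 1"
  shows "(1 - z*(Q*S)) * (1 - w*(Q*S)) - (1 - S) * (1 - S*(Q*Q)) = S * ((1 - z*Q) * (1 - w*Q))"
proof -
  have "(1 - z*(Q*S)) * (1 - w*(Q*S)) - (1 - S) * (1 - S*(Q*Q)) - S * ((1 - z*Q) * (1 - w*Q))
      = (z*w - 1) * (Q*Q*S*S - Q*Q*S)"
    by (simp add: algebra_simps)
  thus ?thesis using assms by simp
qed

lemma bracket_aux:
  assumes "r \<le> N"
  shows "(1 - zz*qq^(Suc N)) * (1 - zinv*qq^(Suc N)) - (1 - qq^(Suc N - r)) * (1 - qq^(Suc N + r))
       = qq^(Suc N - r) * ((1 - zz*qq^r) * (1 - zinv*qq^r))"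
proof -
  obtain s where s: "Suc N = r + s" using le_Suc_ex[OF le_SucI[OF assms]] by blast
  have e: "Suc N - r = s" "Suc N + r = s + 2*r" using s by auto
  have p1: "qq^(Suc N) = qq^r * qq^s" unfolding s by (rule power_add)
  have p2: "qq^(Suc N + r) = qq^s * (qq^r * qq^r)" unfolding e by (simp add: power_add mult_2)
  show ?thesis unfolding p1 p2 e(1) by (rule bracket_gen[OF zz_inv])
qed

lemma aux1:
  fixes a b c d u v K W :: "'a::comm_ring_1"
  shows "a = c * u \<Longrightarrow> b = d * v \<Longrightarrow> K * (a * b) + W * (c * d) = (K * (u * v) + W) * (c * d)"
  by (simp add: algebra_simps)

lemma aux2:
  fixes K A B W :: "'a::comm_ring_1"
  shows "K * (A - B) = W \<Longrightarrow> K * B + W = K * A"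
  by (auto simp: algebra_simps)

lemma TT:
  assumes "r \<le> N"
  shows "(\<Sum>j\<in>{r..N}. zw j * qq^j * (iq (j-r) * iq (j+r))) = gam r * zwq N * (iq (N-r) * iq (N+r))"
  using assms
proof (induction N rule: dec_induct)
  case base
  have "gam r * zwq r = zw r * qq^r" using zwq_izw[of r] by (simp add: gam_def algebra_simps)
  thus ?case by simp
next
  case (step N)
  have i1: "iq (N - r) = iq (Suc N - r) * (1 - qq^(Suc N - r))"
    using iq_Suc[of "N - r"] step.hyps(1) by (simp add: Suc_diff_le)
  have i2: "iq (N + r) = iq (Suc N + r) * (1 - qq^(Suc N + r))"
    using iq_Suc[of "N + r"] by simp
  have pw: "qq^r * qq^(Suc N - r) = qq^(Suc N)"
    using step.hyps(1) by (simp add: power_add[symmetric])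
  have key: "gam r * zwq N * ((1 - zz*qq^(Suc N)) * (1 - zinv*qq^(Suc N)) - (1 - qq^(Suc N - r)) * (1 - qq^(Suc N + r)))
           = zw (Suc N) * qq^(Suc N)"
  proof -
    have "gam r * zwq N * ((1 - zz*qq^(Suc N)) * (1 - zinv*qq^(Suc N)) - (1 - qq^(Suc N - r)) * (1 - qq^(Suc N + r)))
        = gam r * zwq N * (qq^(Suc N - r) * ((1 - zz*qq^r) * (1 - zinv*qq^r)))"
      by (simp only: bracket_aux[OF step.hyps(1)])
    also have "\<dots> = (zw r * izw r * ((1 - zz*qq^r) * (1 - zinv*qq^r))) * zwq N * (qq^r * qq^(Suc N - r))"
      by (simp only: gam_def mult_ac)
    also have "\<dots> = cz * zwq N * qq^(Suc N)" by (simp only: zw_r_aux pw)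
    also have "\<dots> = zw (Suc N) * qq^(Suc N)" by (simp only: zw_Suc)
    finally show ?thesis .
  qed
  have "(\<Sum>j\<in>{r..Suc N}. zw j * qq^j * (iq (j-r) * iq (j+r)))
       = gam r * zwq N * (iq (N-r) * iq (N+r)) + zw (Suc N) * qq^(Suc N) * (iq (Suc N - r) * iq (Suc N + r))"
    using step.hyps step.IH by simp
  also have "\<dots> = (gam r * zwq N * ((1 - qq^(Suc N - r)) * (1 - qq^(Suc N + r))) + zw (Suc N) * qq^(Suc N)) * (iq (Suc N - r) * iq (Suc N + r))"
    by (rule aux1[OF i1 i2])
  also have "gam r * zwq N * ((1 - qq^(Suc N - r)) * (1 - qq^(Suc N + r))) + zw (Suc N) * qq^(Suc N)
      = gam r * zwq N * ((1 - zz*qq^(Suc N)) * (1 - zinv*qq^(Suc N)))"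
    by (rule aux2[OF key])
  also have "\<dots> = gam r * zwq (Suc N)" by (simp only: zwq_Suc mult.assoc)
  finally show ?case by (simp add: mult.assoc)
qed

lemma tri_double: "2 * tri r + r = r * r"
  by (induction r) (auto simp: algebra_simps)

lemma e_plus: "r \<le> n \<Longrightarrow> tri (n+r) + n * (2*n - (n+r)) = tri n + n*n + tri r"
proof -
  assume "r \<le> n"
  then obtain s where s: "n = r + s" using le_Suc_ex by blast
  have "2*n - (n+r) = s" using s by simp
  thus ?thesis using s by (simp add: tri_add algebra_simps)
qed

lemma e_minus: "r \<le> n \<Longrightarrow> tri (n-r) + n * (2*n - (n-r)) = tri n + n*n + tri (Suc r)"
proof -
  assume "r \<le> n"
  then obtain s where s: "n = r + s" using le_Suc_ex by blast
  have a: "n - r = s" "2*n - (n-r) = n + r" using s by auto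
  show ?thesis unfolding a s using tri_double[of r] by (simp add: tri_add algebra_simps)
qed

lemma neg1_pow_minus: "r \<le> n \<Longrightarrow> (-1::qz)^(n-r) = (-1)^(n+r)"
proof -
  assume "r \<le> n"
  hence "n + r = (n - r) + 2*r" by simp
  hence "(-1::qz)^(n+r) = (-1)^(n-r) * ((-1)^2)^r" by (simp only: power_add power_mult)
  thus ?thesis by simp
qed

lemma iq0[simp]: "iq 0 = 1" by (simp add: iq_def qf_def)

lemma qq_pow_nz: "(qq::qz)^k \<noteq> 0" by (simp add: qq_def)
lemma qq_nz[simp]: "(qq::qz) \<noteq> 0" by (simp add: qq_def)

definition aU :: "nat \<Rightarrow> qz" where
  "aU r = (if r = 0 then 1 else (-1)^r * qq^(tri r) * (1 + qq^r))"

lemma PU: "(\<Sum>r\<le>n. aU r * (iq (n-r) * iq (n+r))) = (if n = 0 then 1 else 0)"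
proof (cases "n = 0")
  case True then show ?thesis by (simp add: aU_def)
next
  case False
  define E where "E = tri n + n*n"
  define g where "g k = (-1)^k * qq^(tri k + n*(2*n-k)) * (iq k * iq (2*n-k))" for k
  have "(\<Prod>i<2*n. qq^n - 1 * qq^i) = 0"
    by (rule prod_zero) (use False in \<open>auto intro!: bexI[where x=n]\<close>)
  hence "(\<Sum>k\<le>2*n. gb qq (2*n) k * ((-1)^k * qq^(tri k) * 1^k * (qq^n)^(2*n-k))) = 0"
    by (simp only: hqb)
  moreover have "(\<Sum>k\<le>2*n. gb qq (2*n) k * ((-1)^k * qq^(tri k) * 1^k * (qq^n)^(2*n-k))) = qf (2*n) * (\<Sum>k\<le>2*n. g k)"
    unfolding sum_distrib_left
    by (rule sum.cong) (auto simp: gb_R g_def power_add power_mult[symmetric] mult_ac)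
  ultimately have "(\<Sum>k\<le>2*n. g k) = 0" using qf_nz by simp
  hence "(\<Sum>r\<le>n. if r = 0 then g n else g (n+r) + g (n-r)) = 0" by (simp only: sum_fold_center)
  moreover have "(\<Sum>r\<le>n. if r = 0 then g n else g (n+r) + g (n-r)) =
      (-1)^n * qq^E * (\<Sum>r\<le>n. aU r * (iq (n-r) * iq (n+r)))"
    unfolding sum_distrib_left
  proof (rule sum.cong[OF refl])
    fix r assume "r \<in> {..n}"
    hence r: "r \<le> n" by simp
    show "(if r = 0 then g n else g (n+r) + g (n-r)) = (-1)^n * qq^E * (aU r * (iq (n-r) * iq (n+r)))"
    proof (cases "r = 0")
      case True then show ?thesis by (simp add: g_def aU_def E_def)
    next
      case False
      have 1: "g (n+r) = (-1)^(n+r) * qq^(E + tri r) * (iq (n-r) * iq (n+r))"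
        unfolding g_def E_def using e_plus[OF r] r by (simp add: mult_ac)
      have 2: "g (n-r) = (-1)^(n+r) * qq^(E + tri (Suc r)) * (iq (n-r) * iq (n+r))"
        unfolding g_def E_def using e_minus[OF r] r neg1_pow_minus[OF r] by (simp add: mult_ac)
      show ?thesis using False unfolding 1 2 aU_def
        by (simp add: power_add algebra_simps)
    qed
  qed
  ultimately have "(-1)^n * qq^E * (\<Sum>r\<le>n. aU r * (iq (n-r) * iq (n+r))) = 0" by simp
  thus ?thesis using False qq_pow_nz[of E] by simp
qed

definition aY :: "nat \<Rightarrow> qz" where
  "aY r = (if r = 0 then 1 else 2 * (-1)^r)"

definition Od :: "nat \<Rightarrow> qz" where "Od n = (\<Prod>i<n. 1 - qq^(2*i+1))"

lemma Od_nth0: "fps_nth (Od n) 0 = 1"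
  by (induction n) (simp_all add: Od_def qq_def)

lemma qf_double: "qf (2*n) = Od n * qf n * qpoch (-qq) n"
proof (induction n)
  case 0 then show ?case by (simp add: Od_def qf_def)
next
  case (Suc n)
  have k: "(1 - qq^(Suc n)) * (1 - (-qq) * qq^n) = (1 - qq^(Suc (Suc (2*n))) :: qz)"
    by (simp add: algebra_simps power_add mult_2 mult_2_right)
  have "qf (2 * Suc n) = qf (2*n) * (1 - qq^(Suc (2*n))) * (1 - qq^(Suc (Suc (2*n))))"
    by (simp add: qf_Suc)
  also have "\<dots> = Od n * (1 - qq^(Suc (2*n))) * qf n * qpoch (-qq) n * ((1 - qq^(Suc n)) * (1 - (-qq) * qq^n))"
    unfolding Suc.IH k by (simp only: mult_ac)
  also have "\<dots> = Od (Suc n) * qf (Suc n) * qpoch (-qq) (Suc n)"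
    by (simp add: Od_def qf_Suc qpoch_Suc mult_ac)
  finally show ?case .
qed

lemma PY: "(\<Sum>r\<le>n. aY r * (iq (n-r) * iq (n+r))) = (-1)^n * (iq n * ineg n)"
proof -
  define S where "S = (\<Sum>r\<le>n. aY r * (iq (n-r) * iq (n+r)))"
  define g where "g k = (-1)^k * (iq k * iq (2*n-k))" for k
  have "G0 qq (2*n) = Od n" unfolding Od_def by (rule gauss)
  moreover have "G0 qq (2*n) = qf (2*n) * (\<Sum>k\<le>2*n. g k)"
    unfolding G0_def sum_distrib_left
    by (rule sum.cong) (auto simp: gb_R g_def mult_ac)
  moreover have "(\<Sum>k\<le>2*n. g k) = (-1)^n * S"
    unfolding sum_fold_center S_def sum_distrib_left
  proof (rule sum.cong[OF refl])
    fix r assume "r \<in> {..n}"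
    hence r: "r \<le> n" by simp
    show "(if r = 0 then g n else g (n+r) + g (n-r)) = (-1)^n * (aY r * (iq (n-r) * iq (n+r)))"
    proof (cases "r = 0")
      case True then show ?thesis by (simp add: g_def aY_def)
    next
      case False
      have a: "2*n - (n+r) = n - r" "2*n - (n-r) = n + r" using r by auto
      have "g (n+r) + g (n-r) = 2 * (-1)^(n+r) * (iq (n-r) * iq (n+r))"
        unfolding g_def a neg1_pow_minus[OF r] by (simp add: mult_ac)
      thus ?thesis using False by (simp add: aY_def power_add mult_ac)
    qed
  qed
  ultimately have eq: "qf (2*n) * ((-1)^n * S) = Od n" by simp
  have io: "inverse (Od n) * Od n = 1" by (rule inverse_mult_eq_1) (simp add: Od_nth0)
  have "iq (2*n) = inverse (Od n) * (iq n * ineg n)"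
    unfolding iq_def ineg_def qf_double by (simp add: fps_inverse_mult mult_ac)
  hence "(-1)^n * Od n * iq (2*n) = (-1)^n * (iq n * ineg n) * (inverse (Od n) * Od n)"
    by (simp add: mult_ac)
  also have "\<dots> = (-1)^n * (iq n * ineg n)" using io by simp
  finally have 1: "(-1)^n * Od n * iq (2*n) = (-1)^n * (iq n * ineg n)" .
  have "(-1)^n * Od n * iq (2*n) = ((-1)^n * (-1)^n) * S * (qf (2*n) * iq (2*n))"
    unfolding eq[symmetric] by (simp add: mult_ac)
  also have "\<dots> = S" by (simp add: qf_iq power_add[symmetric] mult_2[symmetric] power_mult)
  finally show ?thesis using 1 S_def by simp
qed

lemma qb_R: "qpoch x n = (\<Sum>k\<le>n. gb qq n k * ((-1)^k * qq^(tri k) * x^k))"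
  by (simp add: qpoch_qp qbinom)

lemma gb_prod:
  assumes "i + l \<le> m"
  shows "gb qq m i * gb qq (m-i) l = gb qq m (i+l) * gb qq (i+l) i"
proof -
  have e: "m - i - l = m - (i+l)" "i + l - i = l" by auto
  have "gb qq m i * gb qq (m-i) l = qf m * (iq i * iq (m-i)) * (qf (m-i) * (iq l * iq (m-i-l)))"
    using assms by (simp add: gb_R)
  also have "\<dots> = qf m * iq i * iq l * iq (m-(i+l)) * (qf (m-i) * iq (m-i))"
    unfolding e by (simp only: mult_ac)
  also have "\<dots> = qf m * iq i * iq l * iq (m-(i+l))" by (simp add: qf_iq)
  finally have 1: "gb qq m i * gb qq (m-i) l = qf m * iq i * iq l * iq (m-(i+l))" .
  have "gb qq m (i+l) * gb qq (i+l) i = qf m * (iq (i+l) * iq (m-(i+l))) * (qf (i+l) * (iq i * iq (i+l-i)))"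
    using assms by (simp add: gb_R)
  also have "\<dots> = qf m * iq i * iq l * iq (m-(i+l)) * (qf (i+l) * iq (i+l))"
    unfolding e by (simp only: mult_ac)
  also have "\<dots> = qf m * iq i * iq l * iq (m-(i+l))" by (simp add: qf_iq)
  finally show ?thesis using 1 by simp
qed

lemma T_eq:
  fixes a :: qz
  shows "qpoch a i * (-a)^i * qq^(tri (Suc i)) * ((-1)^l * qq^(tri l) * (a^2 * qq^(Suc i))^l)
       = (-a)^(i+l) * qq^(tri (Suc (i+l))) * (qpoch a i * a^l)"
proof -
  have t: "tri (Suc (i+l)) = tri (Suc i) + tri l + Suc i * l"
    using tri_add[of "Suc i" l] by simp
  show ?thesis unfolding t
    by (simp add: power_add power_mult_distrib power_mult[symmetric] power_minus[of a] mult_2 mult_2_right mult_ac)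
qed

lemma FM:
  fixes a :: qz
  shows "(\<Sum>i\<le>m. gb qq m i * (qpoch a i * (-a)^i * qq^(tri (Suc i)) * qpoch (a^2 * qq^(Suc i)) (m-i)))
       = qpoch (a*qq) m"
proof -
  define f where "f N i = gb qq m N * gb qq N i * ((-a)^N * qq^(tri (Suc N)) * (qpoch a i * a^(N-i)))" for N i
  have "(\<Sum>i\<le>m. gb qq m i * (qpoch a i * (-a)^i * qq^(tri (Suc i)) * qpoch (a^2 * qq^(Suc i)) (m-i)))
      = (\<Sum>i\<le>m. \<Sum>l\<le>m-i. f (i+l) i)"
  proof (rule sum.cong[OF refl])
    fix i assume "i \<in> {..m}"
    hence i: "i \<le> m" by simp
    have "gb qq m i * (qpoch a i * (-a)^i * qq^(tri (Suc i)) * qpoch (a^2 * qq^(Suc i)) (m-i))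
        = (\<Sum>l\<le>m-i. gb qq m i * gb qq (m-i) l * (qpoch a i * (-a)^i * qq^(tri (Suc i)) * ((-1)^l * qq^(tri l) * (a^2 * qq^(Suc i))^l)))"
      unfolding qb_R[of "a^2 * qq^(Suc i)" "m-i"] sum_distrib_left by (simp only: mult_ac)
    also have "\<dots> = (\<Sum>l\<le>m-i. f (i+l) i)"
    proof (rule sum.cong[OF refl])
      fix l assume "l \<in> {..m-i}"
      hence il: "i + l \<le> m" using i by simp
      show "gb qq m i * gb qq (m-i) l * (qpoch a i * (-a)^i * qq^(tri (Suc i)) * ((-1)^l * qq^(tri l) * (a^2 * qq^(Suc i))^l)) = f (i+l) i"
        unfolding gb_prod[OF il] T_eq f_def by simp
    qed
    finally show "gb qq m i * (qpoch a i * (-a)^i * qq^(tri (Suc i)) * qpoch (a^2 * qq^(Suc i)) (m-i)) = (\<Sum>l\<le>m-i. f (i+l) i)" .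
  qed
  also have "\<dots> = (\<Sum>(i,l)\<in>Sigma {..m} (\<lambda>i. {..m-i}). f (i+l) i)"
    by (rule sum.Sigma) auto
  also have "Sigma {..m} (\<lambda>i. {..m-i}) = {(i,l). i + l \<le> m}" by auto
  also have "(\<Sum>(i,l)\<in>{(i,l). i + l \<le> m}. f (i+l) i) = (\<Sum>N\<le>m. \<Sum>i\<le>N. f (i + (N - i)) i)"
    by (rule sum.triangle_reindex_eq)
  also have "\<dots> = (\<Sum>N\<le>m. gb qq m N * ((-a)^N * qq^(tri (Suc N))) * (\<Sum>i\<le>N. gb qq N i * (qp qq a i * a^(N-i))))"
  proof (rule sum.cong[OF refl])
    fix N assume "N \<in> {..m}"
    show "(\<Sum>i\<le>N. f (i + (N - i)) i) = gb qq m N * ((-a)^N * qq^(tri (Suc N))) * (\<Sum>i\<le>N. gb qq N i * (qp qq a i * a^(N-i)))"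
      unfolding sum_distrib_left by (rule sum.cong) (auto simp: f_def qpoch_qp mult_ac)
  qed
  also have "\<dots> = (\<Sum>N\<le>m. gb qq m N * ((-1)^N * qq^(tri N) * (a*qq)^N))"
    unfolding gb_H by (rule sum.cong) (auto simp: power_minus[of a] power_mult_distrib mult_ac power_add)
  also have "\<dots> = qpoch (a*qq) m" by (simp only: qb_R)
  finally show ?thesis .
qed

definition kap :: "nat \<Rightarrow> qz" where "kap r = qpoch (-1) r * qq^(tri (Suc r)) * ineg r"

lemma qpoch_add: "qpoch a (m + k) = qpoch a m * qpoch (a * qq^m) k"
  by (simp add: qpoch_qp qp_add)

lemma KK:
  assumes "r \<le> n"
  shows "(\<Sum>j\<in>{r..n}. (qpoch (-1) j * qq^(tri (Suc j)) * iq (n-j)) * (iq (j-r) * iq (j+r)))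
       = kap r * qpoch (-qq) n * (iq (n-r) * iq (n+r))"
proof -
  obtain m where n: "n = r + m" using assms le_Suc_ex by blast
  define a :: qz where "a = - (qq^r)"
  define X where "X = qpoch (-1) r * qq^(tri (Suc r)) * iq m * iq (n+r)"
  have FM': "(\<Sum>i\<le>m. gb qq m i * (qpoch a i * (-a)^i * qq^(tri (Suc i)) * qpoch (a^2 * qq^(Suc i)) (m-i)))
       = qpoch (a*qq) m" by (rule FM)
  have reidx: "(\<Sum>j\<in>{r..n}. (qpoch (-1) j * qq^(tri (Suc j)) * iq (n-j)) * (iq (j-r) * iq (j+r)))
     = (\<Sum>i\<le>m. (qpoch (-1) (r+i) * qq^(tri (Suc (r+i))) * iq (n-(r+i))) * (iq (r+i-r) * iq (r+i+r)))"
    by (rule sum.reindex_bij_witness[where i="\<lambda>i. r + i" and j="\<lambda>j. j - r"]) (auto simp: n)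
  have trm: "(qpoch (-1) (r+i) * qq^(tri (Suc (r+i))) * iq (n-(r+i))) * (iq (r+i-r) * iq (r+i+r))
      = X * (gb qq m i * (qpoch a i * (-a)^i * qq^(tri (Suc i)) * qpoch (a^2 * qq^(Suc i)) (m-i)))"
    if i: "i \<le> m" for i
  proof -
    have L1: "qpoch (-1) r * qpoch a i = qpoch (-1) (r+i)"
      unfolding qpoch_add a_def by simp
    have t: "tri (Suc (r+i)) = tri (Suc r) + tri i + Suc r * i"
      using tri_add[of "Suc r" i] by simp
    have L2: "qq^(tri (Suc r)) * (-a)^i * qq^(tri (Suc i)) = qq^(tri (Suc (r+i)))"
      unfolding t a_def by (simp add: power_add power_mult[symmetric] mult_ac)
    have split: "qf (n+r) = qf (r+i+r) * qpoch (qq * qq^(r+i+r)) (m-i)"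
    proof -
      have "n + r = (r+i+r) + (m-i)" using i n by simp
      thus ?thesis unfolding qf_def by (simp only: qpoch_add)
    qed
    have pa: "a^2 * qq^(Suc i) = qq * qq^(r+i+r)"
      unfolding a_def by (simp add: power_add power2_eq_square mult_ac)
    have L3: "iq (n+r) * qpoch (a^2 * qq^(Suc i)) (m-i) = iq (r+i+r)"
    proof -
      have "iq (n+r) = iq (r+i+r) * inverse (qpoch (qq * qq^(r+i+r)) (m-i))"
        unfolding iq_def split by (rule fps_inverse_mult)
      hence "iq (n+r) * qpoch (qq * qq^(r+i+r)) (m-i) = iq (r+i+r) * (qpoch (qq * qq^(r+i+r)) (m-i) * inverse (qpoch (qq * qq^(r+i+r)) (m-i)))"
        by (simp only: mult_ac)
      also have "\<dots> = iq (r+i+r)" by (simp add: qpoch_inv)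
      finally show ?thesis unfolding pa .
    qed
    have L4: "iq m * qf m = 1" using qf_iq[of m] by (simp add: mult_ac)
    have e: "n - (r+i) = m - i" "r + i - r = i" using n by auto
    have "X * (gb qq m i * (qpoch a i * (-a)^i * qq^(tri (Suc i)) * qpoch (a^2 * qq^(Suc i)) (m-i)))
        = (qpoch (-1) r * qpoch a i) * (qq^(tri (Suc r)) * (-a)^i * qq^(tri (Suc i)))
          * (iq (n+r) * qpoch (a^2 * qq^(Suc i)) (m-i)) * (iq m * qf m) * (iq i * iq (m-i))"
      unfolding X_def gb_R[OF i] by (simp only: mult_ac)
    also have "\<dots> = qpoch (-1) (r+i) * qq^(tri (Suc (r+i))) * iq (r+i+r) * (iq i * iq (m-i))"
      unfolding L1 L2 L3 L4 by simp
    finally show ?thesis unfolding e by (simp only: mult_ac)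
  qed
  have "(\<Sum>j\<in>{r..n}. (qpoch (-1) j * qq^(tri (Suc j)) * iq (n-j)) * (iq (j-r) * iq (j+r)))
      = X * qpoch (a*qq) m"
    unfolding reidx FM'[symmetric] sum_distrib_left by (rule sum.cong[OF refl], rule trm) simp
  also have "X * qpoch (a*qq) m = kap r * qpoch (-qq) n * (iq (n-r) * iq (n+r))"
  proof -
    have "qpoch (-qq) n = qpoch (-qq) r * qpoch (a*qq) m"
      unfolding n qpoch_add a_def by (simp add: mult_ac)
    hence "kap r * qpoch (-qq) n * (iq (n-r) * iq (n+r)) =
        qpoch (-1) r * qq^(tri (Suc r)) * (qpoch (-qq) r * ineg r) * qpoch (a*qq) m * (iq m * iq (n+r))"
      unfolding kap_def using n by (simp only: mult_ac) simp
    also have "\<dots> = X * qpoch (a*qq) m" unfolding qneg_ineg X_def by (simp add: mult_ac)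
    finally show ?thesis by simp
  qed
  finally show ?thesis .
qed

lemma CY: "(\<Sum>j\<le>N. zw j * qq^j * ((-1)^j * (iq j * ineg j)))
    = (\<Sum>r\<le>N. aY r * (gam r * zwq N) * (iq (N-r) * iq (N+r)))"
  by (rule bailey[where A="\<lambda>j. zw j * qq^j" and C="\<lambda>r. gam r * zwq N" and \<alpha>=aY and \<beta>="\<lambda>j. (-1)^j * (iq j * ineg j)"],
      rule TT, assumption, rule PY[symmetric])

lemma Cbeta: "izw n = (\<Sum>r\<le>n. (aU r * gam r) * (iq (n-r) * iq (n+r)))"
proof -
  have "(\<Sum>j\<le>n. zw j * qq^j * (if j = 0 then 1 else 0)) = (\<Sum>r\<le>n. aU r * (gam r * zwq n) * (iq (n-r) * iq (n+r)))"
    by (rule bailey[where A="\<lambda>j. zw j * qq^j" and C="\<lambda>r. gam r * zwq n" and \<alpha>=aU and \<beta>="\<lambda>j. if j = 0 then 1 else 0"],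
      rule TT, assumption, rule PU[symmetric])
  moreover have "(\<Sum>j\<le>n. zw j * qq^j * (if j = 0 then 1 else 0)) = (1::qz)"
    by (simp add: zw_def if_distrib sum.delta cong: if_cong)
  ultimately have "1 = (\<Sum>r\<le>n. aU r * (gam r * zwq n) * (iq (n-r) * iq (n+r)))" by simp
  hence "izw n = izw n * (\<Sum>r\<le>n. aU r * (gam r * zwq n) * (iq (n-r) * iq (n+r)))" by simp
  also have "\<dots> = (\<Sum>r\<le>n. (aU r * gam r) * (iq (n-r) * iq (n+r)) * (zwq n * izw n))"
    unfolding sum_distrib_left by (rule sum.cong) (simp_all add: mult_ac)
  finally show ?thesis by (simp add: zwq_izw)
qed

lemma CPX: "iq j * ineg j = (\<Sum>r\<le>j. (aU r * kap r) * (iq (j-r) * iq (j+r)))"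
proof -
  have "(\<Sum>i\<le>j. (qpoch (-1) i * qq^(tri (Suc i)) * iq (j-i)) * (if i = 0 then 1 else 0))
      = (\<Sum>r\<le>j. aU r * (kap r * qpoch (-qq) j) * (iq (j-r) * iq (j+r)))"
    by (rule bailey[where A="\<lambda>i. qpoch (-1) i * qq^(tri (Suc i)) * iq (j-i)" and C="\<lambda>r. kap r * qpoch (-qq) j" and \<alpha>=aU and \<beta>="\<lambda>j. if j = 0 then 1 else 0"],
      rule KK, assumption, rule PU[symmetric])
  moreover have "(\<Sum>i\<le>j. (qpoch (-1) i * qq^(tri (Suc i)) * iq (j-i)) * (if i = 0 then 1 else 0)) = iq j"
    by (simp add: if_distrib sum.delta cong: if_cong)
  ultimately have "iq j = (\<Sum>r\<le>j. aU r * (kap r * qpoch (-qq) j) * (iq (j-r) * iq (j+r)))" by simp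
  hence "iq j * ineg j = (\<Sum>r\<le>j. aU r * (kap r * qpoch (-qq) j) * (iq (j-r) * iq (j+r))) * ineg j" by simp
  also have "\<dots> = (\<Sum>r\<le>j. (aU r * kap r) * (iq (j-r) * iq (j+r)) * (qpoch (-qq) j * ineg j))"
    unfolding sum_distrib_right by (rule sum.cong) (simp_all add: mult_ac)
  finally show ?thesis by (simp add: qneg_ineg)
qed

lemma DB: "ineg N * (\<Sum>n\<le>N. (qpoch (-1) n * qq^(tri (Suc n)) * iq (N-n)) * izw n)
         = izw N * (\<Sum>j\<le>N. zw j * qq^j * (iq j * ineg j))"
proof -
  have 1: "(\<Sum>n\<le>N. (qpoch (-1) n * qq^(tri (Suc n)) * iq (N-n)) * izw n)
        = (\<Sum>r\<le>N. (aU r * gam r) * (kap r * qpoch (-qq) N) * (iq (N-r) * iq (N+r)))"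
    by (rule bailey[where A="\<lambda>n. qpoch (-1) n * qq^(tri (Suc n)) * iq (N-n)" and C="\<lambda>r. kap r * qpoch (-qq) N" and \<alpha>="\<lambda>r. aU r * gam r" and \<beta>=izw],
      rule KK, assumption, rule Cbeta)
  have 2: "(\<Sum>j\<le>N. zw j * qq^j * (iq j * ineg j))
        = (\<Sum>r\<le>N. (aU r * kap r) * (gam r * zwq N) * (iq (N-r) * iq (N+r)))"
    by (rule bailey[where A="\<lambda>j. zw j * qq^j" and C="\<lambda>r. gam r * zwq N" and \<alpha>="\<lambda>r. aU r * kap r" and \<beta>="\<lambda>j. iq j * ineg j"],
      rule TT, assumption, rule CPX)
  have "ineg N * (\<Sum>n\<le>N. (qpoch (-1) n * qq^(tri (Suc n)) * iq (N-n)) * izw n)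
      = (\<Sum>r\<le>N. (aU r * gam r * kap r) * (iq (N-r) * iq (N+r)) * (qpoch (-qq) N * ineg N))"
    unfolding 1 sum_distrib_left by (rule sum.cong) (simp_all add: mult_ac)
  also have "\<dots> = (\<Sum>r\<le>N. (aU r * gam r * kap r) * (iq (N-r) * iq (N+r)) * (zwq N * izw N))"
    by (simp add: qneg_ineg zwq_izw)
  also have "\<dots> = izw N * (\<Sum>j\<le>N. zw j * qq^j * (iq j * ineg j))"
    unfolding 2 sum_distrib_left by (rule sum.cong) (simp_all add: mult_ac)
  finally show ?thesis .
qed

declare teq_trans[trans]

lemma teq_mult_ordge: "ordge (Suc n) f \<Longrightarrow> teq n (f * g) (f * g')"
proof -
  assume f: "ordge (Suc n) f"
  have "f * g - f * g' = f * (g - g')" by (simp add: algebra_simps)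
  moreover have "ordge (Suc n) (f * (g - g'))" using f by (rule ordge_mult_right)
  ultimately show ?thesis by (simp add: teq_ordge)
qed

lemma teq_mult_ordge': "ordge (Suc n) f \<Longrightarrow> teq n (g * f) (g' * f)"
  using teq_mult_ordge[of n f g g'] by (simp add: mult.commute)

lemma ordge_factor: "f = qq^k * g \<Longrightarrow> ordge k f"
  using ordge_X_power by simp

lemma qinf_nth0: "fps_nth a 0 = 0 \<Longrightarrow> fps_nth (qpoch_inf a) 0 = 1"
  using qpoch_inf_teq[of a 0 0] by (simp add: teq_def)

lemma qinf_inv: "fps_nth a 0 = 0 \<Longrightarrow> qpoch_inf a * inverse (qpoch_inf a) = 1"
  by (rule unit_inv) (simp add: qinf_nth0)

lemma teq_qinf: "fps_nth a 0 = 0 \<Longrightarrow> n \<le> m \<Longrightarrow> teq n (qpoch a m) (qpoch_inf a)"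
  by (rule teq_sym, rule qpoch_inf_teq)

lemma teq_inv_qinf: "fps_nth a 0 = 0 \<Longrightarrow> n \<le> m \<Longrightarrow> teq n (inverse (qpoch a m)) (inverse (qpoch_inf a))"
  by (rule teq_inverse) (simp_all add: teq_qinf qpoch_nth0)

lemma qinf_split:
  assumes a: "fps_nth a 0 = 0"
  shows "qpoch_inf a = qpoch a m * qpoch_inf (a * qq^m)"
proof (rule fps_eq_teqI)
  fix n
  have a': "fps_nth (a * qq^m) 0 = 0" using a by simp
  have "teq n (qpoch_inf a) (qpoch a (m + n))" using a by (rule qpoch_inf_teq) simp
  also have "qpoch a (m + n) = qpoch a m * qpoch (a * qq^m) n" by (rule qpoch_add)
  finally have 1: "teq n (qpoch_inf a) (qpoch a m * qpoch (a * qq^m) n)" .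
  have "teq n (qpoch a m * qpoch (a * qq^m) n) (qpoch a m * qpoch_inf (a * qq^m))"
    by (rule teq_mult[OF teq_refl teq_qinf[OF a']]) simp
  with 1 show "teq n (qpoch_inf a) (qpoch a m * qpoch_inf (a * qq^m))" by (rule teq_trans)
qed

definition Qi :: qz where "Qi = qpoch_inf qq"
definition Ni :: qz where "Ni = qpoch_inf (-qq)"
definition Zi :: qz where "Zi = qpoch_inf (zz*qq)"
definition Wi :: qz where "Wi = qpoch_inf (zinv*qq)"
definition Ph :: qz where "Ph = Ni * Qi * inverse Zi * inverse Wi"

definition Ot :: "nat \<Rightarrow> qz" where "Ot k = qpoch (-1) k * qq^(tri (Suc k)) * izw k"
definition Xt :: "nat \<Rightarrow> qz" where "Xt j = zw j * qq^j * (iq j * ineg j)"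
definition Yt :: "nat \<Rightarrow> qz" where "Yt j = zw j * qq^j * ((-1)^j * (iq j * ineg j))"
definition Gt :: "nat \<Rightarrow> qz" where "Gt r = aY r * gam r"

lemma Ot_ord: "ordge k (Ot k)"
  by (rule ordge_factor[where g="qpoch (-1) k * qq^(tri k) * izw k"]) (simp add: Ot_def power_add mult_ac)
lemma Xt_ord: "ordge k (Xt k)"
  by (rule ordge_factor[where g="zw k * (iq k * ineg k)"]) (simp add: Xt_def mult_ac)
lemma Yt_ord: "ordge k (Yt k)"
  by (rule ordge_factor[where g="zw k * ((-1)^k * (iq k * ineg k))"]) (simp add: Yt_def mult_ac)
lemma Gt_ord: "ordge k (Gt k)"
  by (rule ordge_factor[where g="aY k * zw k * izw k"]) (simp add: Gt_def gam_def mult_ac)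

lemma ordge_Suc_mono: "ordge k f \<Longrightarrow> n < k \<Longrightarrow> ordge (Suc n) f"
  using ordge_mono by (metis Suc_leI)

lemma I1: "suminf Ot * inverse Qi * inverse Ni = suminf Xt * inverse Zi * inverse Wi"
proof (rule fps_eq_teqI)
  fix n
  define N where "N = Suc (2*n)"
  have DB': "ineg N * (\<Sum>k\<le>N. (qpoch (-1) k * qq^(tri (Suc k)) * iq (N-k)) * izw k)
         = izw N * (\<Sum>j\<le>N. Xt j)" unfolding Xt_def by (rule DB)
  have A1: "teq n (ineg N) (inverse Ni)" unfolding ineg_def Ni_def
    by (rule teq_inv_qinf) (simp_all add: N_def)
  have A2: "teq n (\<Sum>k\<le>N. (qpoch (-1) k * qq^(tri (Suc k)) * iq (N-k)) * izw k) (\<Sum>k\<le>N. Ot k * inverse Qi)"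
  proof (rule teq_sum)
    fix k assume k: "k \<in> {..N}"
    have e: "(qpoch (-1) k * qq^(tri (Suc k)) * iq (N-k)) * izw k = Ot k * iq (N-k)"
      by (simp add: Ot_def mult_ac)
    show "teq n ((qpoch (-1) k * qq^(tri (Suc k)) * iq (N-k)) * izw k) (Ot k * inverse Qi)"
    proof (cases "k \<le> n")
      case True
      have "teq n (iq (N-k)) (inverse Qi)" unfolding iq_def qf_def Qi_def
        by (rule teq_inv_qinf) (use True in \<open>simp_all add: N_def\<close>)
      thus ?thesis unfolding e by (rule teq_mult[OF teq_refl])
    next
      case False
      thus ?thesis unfolding e by (intro teq_mult_ordge ordge_Suc_mono[OF Ot_ord]) simp
    qed
  qed
  have A3: "(\<Sum>k\<le>N. Ot k * inverse Qi) = (\<Sum>k<Suc N. Ot k) * inverse Qi"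
    by (simp add: sum_distrib_right lessThan_Suc_atMost)
  have A4: "teq n (\<Sum>k<Suc N. Ot k) (suminf Ot)"
    by (rule teq_sym, rule suminf_teq[OF Ot_ord]) (simp add: N_def)
  have L: "teq n (ineg N * (\<Sum>k\<le>N. (qpoch (-1) k * qq^(tri (Suc k)) * iq (N-k)) * izw k))
                 (suminf Ot * inverse Qi * inverse Ni)"
  proof -
    have "teq n (ineg N * (\<Sum>k\<le>N. (qpoch (-1) k * qq^(tri (Suc k)) * iq (N-k)) * izw k))
                 (inverse Ni * ((\<Sum>k<Suc N. Ot k) * inverse Qi))"
      using teq_mult[OF A1 A2] A3 by simp
    also have "teq n (inverse Ni * ((\<Sum>k<Suc N. Ot k) * inverse Qi)) (inverse Ni * (suminf Ot * inverse Qi))"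
      by (intro teq_mult teq_refl A4)
    finally show ?thesis by (simp add: mult_ac)
  qed
  have B1: "teq n (izw N) (inverse Zi * inverse Wi)" unfolding izw_def Zi_def Wi_def
    by (intro teq_mult teq_inv_qinf) (simp_all add: N_def)
  have B2: "teq n (\<Sum>j\<le>N. Xt j) (suminf Xt)"
    unfolding lessThan_Suc_atMost[symmetric]
    by (rule teq_sym, rule suminf_teq[OF Xt_ord]) (simp add: N_def)
  have R: "teq n (izw N * (\<Sum>j\<le>N. Xt j)) (suminf Xt * inverse Zi * inverse Wi)"
    using teq_mult[OF B1 B2] by (simp add: mult_ac)
  have "teq n (suminf Ot * inverse Qi * inverse Ni) (ineg N * (\<Sum>k\<le>N. (qpoch (-1) k * qq^(tri (Suc k)) * iq (N-k)) * izw k))"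
    by (rule teq_sym[OF L])
  also note DB'
  also note R
  finally show "teq n (suminf Ot * inverse Qi * inverse Ni) (suminf Xt * inverse Zi * inverse Wi)" .
qed

lemma I2: "suminf Yt = Zi * Wi * (inverse Qi * inverse Qi) * suminf Gt"
proof (rule fps_eq_teqI)
  fix n
  define N where "N = Suc (2*n)"
  define C where "C = Zi * Wi * (inverse Qi * inverse Qi)"
  have CY': "(\<Sum>j\<le>N. Yt j) = (\<Sum>r\<le>N. aY r * (gam r * zwq N) * (iq (N-r) * iq (N+r)))"
    unfolding Yt_def by (rule CY)
  have A: "teq n (suminf Yt) (\<Sum>j\<le>N. Yt j)"
    unfolding lessThan_Suc_atMost[symmetric] by (rule suminf_teq[OF Yt_ord]) (simp add: N_def)
  have B: "teq n (\<Sum>r\<le>N. aY r * (gam r * zwq N) * (iq (N-r) * iq (N+r))) (\<Sum>r\<le>N. Gt r * C)"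
  proof (rule teq_sum)
    fix r assume r: "r \<in> {..N}"
    have e: "aY r * (gam r * zwq N) * (iq (N-r) * iq (N+r)) = Gt r * (zwq N * (iq (N-r) * iq (N+r)))"
      by (simp add: Gt_def mult_ac)
    show "teq n (aY r * (gam r * zwq N) * (iq (N-r) * iq (N+r))) (Gt r * C)"
    proof (cases "r \<le> n")
      case True
      have "teq n (zwq N * (iq (N-r) * iq (N+r))) C"
        unfolding C_def zwq_def Zi_def Wi_def iq_def qf_def Qi_def
        by (intro teq_mult teq_qinf teq_inv_qinf) (use True in \<open>simp_all add: N_def\<close>)
      thus ?thesis unfolding e by (rule teq_mult[OF teq_refl])
    next
      case False
      thus ?thesis unfolding e by (intro teq_mult_ordge ordge_Suc_mono[OF Gt_ord]) simp
    qed
  qed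
  have B2: "(\<Sum>r\<le>N. Gt r * C) = (\<Sum>r<Suc N. Gt r) * C"
    by (simp add: sum_distrib_right lessThan_Suc_atMost)
  have B3: "teq n ((\<Sum>r<Suc N. Gt r) * C) (suminf Gt * C)"
    by (intro teq_mult teq_refl teq_sym[OF suminf_teq[OF Gt_ord]]) (simp add: N_def)
  have "teq n (suminf Yt) (\<Sum>r\<le>N. aY r * (gam r * zwq N) * (iq (N-r) * iq (N+r)))"
    using A CY' by simp
  also note B
  also note B2
  also note B3
  finally show "teq n (suminf Yt) (Zi * Wi * (inverse Qi * inverse Qi) * suminf Gt)"
    by (simp add: C_def mult_ac)
qed

definition S1t :: "nat \<Rightarrow> qz" where
  "S1t n = qq ^ (2*n+1) * qpoch_inf (- (qq ^ (2*n+2))) * qpoch_inf (qq ^ (2*n+2))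
               / (qpoch_inf (zz * qq ^ (2*n+1)) * qpoch_inf (zinv * qq ^ (2*n+1)))"

definition Vt :: "nat \<Rightarrow> qz" where
  "Vt n = qq^(Suc (2*n)) * (iq (Suc (2*n)) * ineg (Suc (2*n))) * zwq (2*n)"

lemma inv_split:
  assumes "fps_nth a 0 = 0"
  shows "inverse (qpoch_inf (a * qq^m)) = qpoch a m * inverse (qpoch_inf a)"
proof -
  have "inverse (qpoch_inf a) = inverse (qpoch a m) * inverse (qpoch_inf (a * qq^m))"
    by (subst qinf_split[OF assms, of m]) (rule fps_inverse_mult)
  hence "qpoch a m * inverse (qpoch_inf a) = (qpoch a m * inverse (qpoch a m)) * inverse (qpoch_inf (a * qq^m))"
    by (simp add: mult_ac)
  thus ?thesis using qpoch_inv[OF assms, of m] by simp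
qed

lemma inf_split':
  assumes "fps_nth a 0 = 0"
  shows "qpoch_inf (a * qq^m) = inverse (qpoch a m) * qpoch_inf a"
proof -
  have "inverse (qpoch a m) * qpoch_inf a = (inverse (qpoch a m) * qpoch a m) * qpoch_inf (a * qq^m)"
    by (subst qinf_split[OF assms, of m]) (simp add: mult_ac)
  thus ?thesis using qpoch_inv[OF assms, of m] by (simp add: mult_ac)
qed

lemma S1t_eq: "S1t n = Ph * Vt n"
proof -
  have f1: "qpoch_inf (- (qq ^ (2*n+2))) = ineg (Suc (2*n)) * Ni"
    using inf_split'[of "-qq" "Suc (2*n)"] by (simp add: ineg_def Ni_def)
  have f2: "qpoch_inf (qq ^ (2*n+2)) = iq (Suc (2*n)) * Qi"
    using inf_split'[of "qq" "Suc (2*n)"] by (simp add: iq_def qf_def Qi_def)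
  have f3: "inverse (qpoch_inf (zz * qq ^ (2*n+1))) = qpoch (zz*qq) (2*n) * inverse Zi"
    using inv_split[of "zz*qq" "2*n"] by (simp add: Zi_def mult_ac)
  have f4: "inverse (qpoch_inf (zinv * qq ^ (2*n+1))) = qpoch (zinv*qq) (2*n) * inverse Wi"
    using inv_split[of "zinv*qq" "2*n"] by (simp add: Wi_def mult_ac)
  have d0: "fps_nth (qpoch_inf (zz * qq ^ (2*n+1)) * qpoch_inf (zinv * qq ^ (2*n+1))) 0 \<noteq> 0"
    by (simp add: qinf_nth0)
  have "S1t n = qq ^ (2*n+1) * qpoch_inf (- (qq ^ (2*n+2))) * qpoch_inf (qq ^ (2*n+2))
        * (inverse (qpoch_inf (zz * qq ^ (2*n+1))) * inverse (qpoch_inf (zinv * qq ^ (2*n+1))))"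
    unfolding S1t_def fps_divide_unit[OF d0] fps_inverse_mult ..
  also have "\<dots> = Ph * Vt n"
    unfolding f1 f2 f3 f4 Ph_def Vt_def zwq_def by (simp add: mult_ac)
  finally show ?thesis .
qed

lemma Vt_ord: "ordge n (Vt n)"
  by (rule ordge_factor[where g="qq^(Suc n) * (iq (Suc (2*n)) * ineg (Suc (2*n))) * zwq (2*n)"])
     (simp add: Vt_def power_add mult_2 mult_2_right mult_ac)

lemma czVt: "cz * Vt n = Xt (Suc (2*n))"
  by (simp add: Vt_def Xt_def zw_Suc mult_ac)

lemma neg1_even: "(-1::qz)^(2*M) = 1"
  by (induction M) simp_all

lemma odd_sum: "(\<Sum>j<2*M. Xt j - Yt j) = 2 * (\<Sum>k<M. Xt (Suc (2*k)))"
proof (induction M)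
  case 0 then show ?case by simp
next
  case (Suc M)
  have "(\<Sum>j<2 * Suc M. Xt j - Yt j) = (\<Sum>j<2*M. Xt j - Yt j) + (Xt (2*M) - Yt (2*M)) + (Xt (Suc (2*M)) - Yt (Suc (2*M)))"
    by simp
  also have "Xt (2*M) - Yt (2*M) = 0" by (simp only: Xt_def Yt_def neg1_even) simp
  also have "Xt (Suc (2*M)) - Yt (Suc (2*M)) = 2 * Xt (Suc (2*M))"
    by (simp only: Xt_def Yt_def power_Suc neg1_even) (simp add: algebra_simps)
  finally show ?case using Suc.IH by (simp add: algebra_simps)
qed

lemma two_inv: "2 * inverse (2::qz) = 1"
  by (rule unit_inv) simp

lemma S1bar_eq: "S1bar = suminf (\<lambda>n. Ph * Vt n)"
  unfolding S1bar_def using S1t_eq by (simp add: S1t_def)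

lemma I3: "cz * S1bar = Ph * (suminf Xt - suminf Yt) * inverse 2"
proof (rule fps_eq_teqI)
  fix n
  define M where "M = Suc n"
  have o: "\<And>k. ordge k (Ph * Vt k)" by (rule ordge_mult_left, rule Vt_ord)
  have "teq n (cz * S1bar) (cz * (\<Sum>k<M. Ph * Vt k))"
    unfolding S1bar_eq by (intro teq_mult teq_refl suminf_teq o) (simp add: M_def)
  also have "cz * (\<Sum>k<M. Ph * Vt k) = Ph * (\<Sum>k<M. Xt (Suc (2*k)))"
    unfolding sum_distrib_left
  proof (rule sum.cong[OF refl])
    fix k
    have "cz * (Ph * Vt k) = Ph * (cz * Vt k)" by (rule mult.left_commute)
    also have "\<dots> = Ph * Xt (Suc (2*k))" by (simp only: czVt)
    finally show "cz * (Ph * Vt k) = Ph * Xt (Suc (2*k))" .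
  qed
  also have "\<dots> = Ph * (2 * (\<Sum>k<M. Xt (Suc (2*k)))) * inverse 2"
    using two_inv by (simp add: mult_ac)
  also have "\<dots> = Ph * ((\<Sum>j<2*M. Xt j) - (\<Sum>j<2*M. Yt j)) * inverse 2"
    by (simp add: odd_sum[symmetric] sum_subtractf)
  also have "teq n \<dots> (Ph * (suminf Xt - suminf Yt) * inverse 2)"
    by (intro teq_mult teq_refl teq_diff teq_sym[OF suminf_teq] Xt_ord Yt_ord) (simp_all add: M_def)
  finally show "teq n (cz * S1bar) (Ph * (suminf Xt - suminf Yt) * inverse 2)" .
qed

definition Ht :: "nat \<Rightarrow> qz" where
  "Ht n = (1 - zz) * (1 - zinv) * (-1) ^ (n+1) * qq ^ (n+1)
                     / ((1 - zz * qq ^ (n+1)) * (1 - zinv * qq ^ (n+1)))"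

definition Dd :: "nat \<Rightarrow> qz" where "Dd r = (1 - zz * qq^r) * (1 - zinv * qq^r)"

lemma Dd_nth0: "r > 0 \<Longrightarrow> fps_nth (Dd r) 0 \<noteq> 0"
  by (simp add: Dd_def qq_def)

lemma Ht_eq: "Ht n = cz * (-1)^(Suc n) * qq^(Suc n) * inverse (Dd (Suc n))"
  unfolding Ht_def using fps_divide_unit[OF Dd_nth0[of "Suc n"]] by (simp add: Dd_def cz_def)

lemma zwizw: "r > 0 \<Longrightarrow> zw r * izw r = cz * inverse (Dd r)"
proof -
  assume r: "r > 0"
  have "cz * inverse (Dd r) = zw r * izw r * (Dd r * inverse (Dd r))"
    using zw_r_aux[of r] by (simp add: Dd_def mult_ac)
  also have "\<dots> = zw r * izw r" using unit_inv[OF Dd_nth0[OF r]] by simp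
  finally show ?thesis by simp
qed

lemma Gt_Suc: "Gt (Suc n) = 2 * Ht n"
  unfolding Gt_def aY_def gam_def Ht_eq
  using zwizw[of "Suc n"] by (simp add: mult_ac)

lemma Ht_ord: "ordge n (Ht n)"
  by (rule ordge_factor[where g="cz * (-1)^(Suc n) * qq * inverse (Dd (Suc n))"]) (simp add: Ht_eq mult_ac)

lemma Gt_0: "Gt 0 = 1"
  by (simp add: Gt_def aY_def gam_def zw_def izw_def)

lemma Gs: "suminf Gt = 1 + 2 * suminf Ht"
proof (rule fps_eq_teqI)
  fix n
  have "teq n (suminf Gt) (\<Sum>r<Suc (Suc n). Gt r)"
    by (rule suminf_teq[OF Gt_ord]) simp
  also have "(\<Sum>r<Suc (Suc n). Gt r) = 1 + 2 * (\<Sum>k<Suc n. Ht k)"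
    unfolding sum.lessThan_Suc_shift Gt_0 Gt_Suc by (simp add: sum_distrib_left[symmetric] distrib_left)
  also have "teq n (1 + 2 * (\<Sum>k<Suc n. Ht k)) (1 + 2 * suminf Ht)"
    by (intro teq_add teq_mult teq_refl teq_sym[OF suminf_teq[OF Ht_ord]]) simp
  finally show "teq n (suminf Gt) (1 + 2 * suminf Ht)" .
qed

lemma tri_div: "n * (n + 1) div 2 = tri (Suc n)"
proof -
  have "2 * tri (Suc n) + Suc n = Suc n * Suc n" by (rule tri_double)
  hence "2 * tri (Suc n) = n * (n + 1)" by simp
  thus ?thesis by simp
qed

lemma O_eq: "overpart_rank_gf = suminf Ot"
proof -
  have "\<And>n. qpoch (-1) n * qq ^ (n*(n+1) div 2) / (qpoch (zz*qq) n * qpoch (zinv*qq) n) = Ot n"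
  proof -
    fix n
    have d: "fps_nth (qpoch (zz*qq) n * qpoch (zinv*qq) n) 0 \<noteq> 0" by (simp add: qpoch_nth0)
    show "qpoch (-1) n * qq ^ (n*(n+1) div 2) / (qpoch (zz*qq) n * qpoch (zinv*qq) n) = Ot n"
      unfolding fps_divide_unit[OF d] tri_div Ot_def izw_def fps_inverse_mult by (simp add: mult_ac)
  qed
  thus ?thesis unfolding overpart_rank_gf_def by simp
qed

lemma Abs_half: "Abs_fps (\<lambda>n. Abs_fls (\<lambda>m. Nbar m n / 2)) = overpart_rank_gf * inverse 2"
proof -
  have i2: "inverse (2::qz) = fps_const (inverse 2)"
    by (simp add: numeral_fps_const fps_const_inverse)
  have i2': "inverse (2::rat fls) = fls_const (inverse 2)"
    by (metis fls_const_numeral fls_inverse_const)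
  have h: "fps_nth (overpart_rank_gf * inverse 2) n = fps_nth overpart_rank_gf n * inverse 2" for n
    by (simp only: i2 fps_mult_right_const_nth)
  have "Abs_fls (\<lambda>m. Nbar m n / 2) = fps_nth (overpart_rank_gf * inverse 2) n" for n
  proof -
    have "(\<lambda>m. Nbar m n / 2) = fls_nth (fps_nth overpart_rank_gf n * fls_const (inverse 2))"
      by (rule ext) (simp only: Nbar_def fls_mult_const_nth divide_inverse)
    thus ?thesis unfolding h i2' by (simp only: fls_nth_inverse)
  qed
  hence "(\<lambda>n. Abs_fls (\<lambda>m. Nbar m n / 2)) = fps_nth (overpart_rank_gf * inverse 2)"
    by (simp only: fun_eq_iff) simp
  thus ?thesis by (simp only: fps_nth_inverse)
qed

theorem theorem2p4:
  shows "(1 - zz) * (1 - zinv) * S1bar =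
     Abs_fps (\<lambda>n. Abs_fls (\<lambda>m. Nbar m n / 2))
     - qpoch_inf (- qq) / qpoch_inf qq *
       (1/2 + (\<Sum>n. (1 - zz) * (1 - zinv) * (-1) ^ (n+1) * qq ^ (n+1)
                     / ((1 - zz * qq ^ (n+1)) * (1 - zinv * qq ^ (n+1)))))"
proof -
  have Hs: "(\<Sum>n. (1 - zz) * (1 - zinv) * (-1) ^ (n+1) * qq ^ (n+1)
                     / ((1 - zz * qq ^ (n+1)) * (1 - zinv * qq ^ (n+1)))) = suminf Ht"
  proof -
    have "Ht = (\<lambda>n. (1 - zz) * (1 - zinv) * (-1) ^ (n+1) * qq ^ (n+1)
                     / ((1 - zz * qq ^ (n+1)) * (1 - zinv * qq ^ (n+1))))"
      by (rule ext) (simp only: Ht_def)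
    thus ?thesis by (simp only:)
  qed
  have uQ: "Qi * inverse Qi = 1" unfolding Qi_def by (rule qinf_inv) simp
  have uN: "Ni * inverse Ni = 1" unfolding Ni_def by (rule qinf_inv) simp
  have uZ: "Zi * inverse Zi = 1" unfolding Zi_def by (rule qinf_inv) simp
  have uW: "Wi * inverse Wi = 1" unfolding Wi_def by (rule qinf_inv) simp
  have div: "qpoch_inf (- qq) / qpoch_inf qq = Ni * inverse Qi"
    unfolding Ni_def Qi_def by (rule fps_divide_unit) (simp add: qinf_nth0)
  have half: "(1::qz) / 2 = inverse 2"
    by (simp add: fps_divide_unit)
  have O: "overpart_rank_gf = Ph * suminf Xt"
  proof -
    have "suminf Ot * inverse Qi * inverse Ni * (Qi * Ni) = suminf Ot * ((Qi * inverse Qi) * (Ni * inverse Ni))"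
      by (simp only: mult_ac)
    hence "overpart_rank_gf = suminf Ot * inverse Qi * inverse Ni * (Qi * Ni)"
      using uQ uN by (simp add: O_eq)
    also have "\<dots> = suminf Xt * inverse Zi * inverse Wi * (Qi * Ni)" by (simp only: I1)
    finally show ?thesis by (simp add: Ph_def mult_ac)
  qed
  have Y: "Ni * inverse Qi * suminf Gt = Ph * suminf Yt"
  proof -
    have "Ph * suminf Yt = Ni * inverse Qi * suminf Gt * ((Qi * inverse Qi) * (Zi * inverse Zi) * (Wi * inverse Wi))"
      unfolding I2 Ph_def by (simp add: mult_ac)
    thus ?thesis using uQ uZ uW by simp
  qed
  have G2: "1/2 + suminf Ht = suminf Gt * inverse 2"
    unfolding Gs half using two_inv by (simp add: algebra_simps)
  have "(1 - zz) * (1 - zinv) * S1bar = Ph * (suminf Xt - suminf Yt) * inverse 2"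
    using I3 by (simp add: cz_def)
  also have "\<dots> = (Ph * suminf Xt) * inverse 2 - (Ph * suminf Yt) * inverse 2"
    by (simp only: right_diff_distrib left_diff_distrib)
  also have "\<dots> = overpart_rank_gf * inverse 2 - (Ni * inverse Qi * suminf Gt) * inverse 2"
    by (simp only: O Y)
  also have "\<dots> = overpart_rank_gf * inverse 2 - Ni * inverse Qi * (suminf Gt * inverse 2)"
    by (simp only: mult.assoc)
  also have "\<dots> = Abs_fps (\<lambda>n. Abs_fls (\<lambda>m. Nbar m n / 2))
     - qpoch_inf (- qq) / qpoch_inf qq *
       (1/2 + (\<Sum>n. (1 - zz) * (1 - zinv) * (-1) ^ (n+1) * qq ^ (n+1)
                     / ((1 - zz * qq ^ (n+1)) * (1 - zinv * qq ^ (n+1)))))"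
    unfolding Abs_half div Hs G2 ..
  finally show ?thesis .
qed

end
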